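(* Let $q$ be an odd positive integer, $p>q$ a prime, and $a\in(\mathbb{Z}/pq\mathbb{Z})^*$ with $a^{(p-1)/2}\equiv-1\pmod{pq}$ and such that $\alpha:=a\bmod p$ generates $\mathbb{F}_p^*$. Let $\beta:=a\bmod q\in(\mathbb{Z}/q\mathbb{Z})^*$ and $n=\mathrm{ord}(\beta)$ (so $n\mid p-1$). Let $\psi:\langle\beta\rangle\to\mu_n$, $\beta^j\mapsto e^{2\pi \mathbf{i} j/n}$, and let $\chi$ be the character of $\mathbb{F}_p^*$ given by $\chi(\alpha^j)=e^{2\pi\mathbf{i} j/n}$. Let $B=\{b\in\langle\beta\rangle : b-1\in\langle\beta\rangle\}$ and, for $1\le i,j\le n-1$, $c_{i,j}=\sum_{b\in B}\psi(b)^{-i}\psi(1-b)^{-j}$. Then, with $S=S_{pq}(a)$, $$|S\cap(S+1)|=\frac{1}{n^2}\Big((p+1)|B|+\sum_{1\le i\le j<n-i}2(2-\delta_{i,j})\,\mathrm{Re}\big(c_{i,j}J(\chi^i,\chi^j)\big)\Big),$$ where $\delta_{i,j}$ is the Kronecker delta.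
   Context: $S_{pq}(a)=\{a^j:0\le j<p-1\}\subseteq\mathbb{Z}/pq\mathbb{Z}$, $S+1=\{s+1:s\in S\}$, $\mu_n$ is the group of complex $n$-th roots of unity. A character mod $p$ is a homomorphism $\chi:\mathbb{F}_p^*\to\mathbb{C}^*$; it is extended to $\mathbb{F}_p$ by $\chi(0)=0$ if $\chi$ is nontrivial and $\chi(0)=1$ if $\chi$ is trivial. For characters $\chi,\lambda$ mod $p$ the Jacobi sum is $J(\chi,\lambda)=\sum_{c,d\in\mathbb{F}_p,\,c+d=1}\chi(c)\lambda(d)$. $\mathbf{i}=\sqrt{-1}$. *)

theory Defs
  imports "HOL-Analysis.Analysis" "HOL-Number_Theory.Number_Theory"
begin

(* Residues mod m are represented by naturals in {0..<m}. *)

definition S_set :: "nat \<Rightarrow> nat \<Rightarrow> nat \<Rightarrow> nat set" where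
  "S_set N p a = {a ^ j mod N | j. j < p - 1}"

definition shift1 :: "nat \<Rightarrow> nat set \<Rightarrow> nat set" where
  "shift1 N S = {(s + 1) mod N | s. s \<in> S}"

definition cyc :: "nat \<Rightarrow> nat \<Rightarrow> nat set" where
  "cyc q a = {a ^ k mod q | k. True}"

definition dlog :: "nat \<Rightarrow> nat \<Rightarrow> nat \<Rightarrow> nat" where
  "dlog m a x = (LEAST k. [a ^ k = x] (mod m))"

definition psi :: "nat \<Rightarrow> nat \<Rightarrow> nat \<Rightarrow> nat \<Rightarrow> complex" where
  "psi q a n b = exp (2 * of_real pi * \<i> * of_nat (dlog q a b) / of_nat n)"

definition Bset :: "nat \<Rightarrow> nat \<Rightarrow> nat set" where
  "Bset q a = {b \<in> cyc q a. (b + q - 1) mod q \<in> cyc q a}"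

definition c_coef :: "nat \<Rightarrow> nat \<Rightarrow> nat \<Rightarrow> nat \<Rightarrow> nat \<Rightarrow> complex" where
  "c_coef q a n i j =
     (\<Sum>b\<in>Bset q a. inverse (psi q a n b) ^ i * inverse (psi q a n ((q + 1 - b) mod q)) ^ j)"

definition chi :: "nat \<Rightarrow> nat \<Rightarrow> nat \<Rightarrow> nat \<Rightarrow> complex" where
  "chi p a n x = exp (2 * of_real pi * \<i> * of_nat (dlog p a x) / of_nat n)"

definition char_ext :: "nat \<Rightarrow> (nat \<Rightarrow> complex) \<Rightarrow> nat \<Rightarrow> complex" where
  "char_ext p f x =
     (if x mod p = 0 then (if (\<forall>y\<in>{1..<p}. f y = 1) then 1 else 0) else f (x mod p))"

definition chi_pow :: "nat \<Rightarrow> nat \<Rightarrow> nat \<Rightarrow> nat \<Rightarrow> nat \<Rightarrow> complex" where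
  "chi_pow p a n i = char_ext p (\<lambda>x. chi p a n x ^ i)"

definition jacobi :: "nat \<Rightarrow> (nat \<Rightarrow> complex) \<Rightarrow> (nat \<Rightarrow> complex) \<Rightarrow> complex" where
  "jacobi p f g = (\<Sum>c\<in>{0..<p}. f c * g ((p + 1 - c) mod p))"

end

theory Submission
  imports Defs
begin

locale ctx =
  fixes p q a n :: nat
  assumes q_odd: "odd q" and q_gt: "q > 1" and p_prime: "prime p" and pq: "p > q"
    and cop: "coprime a (p*q)"
    and hyp: "[a ^ ((p - 1) div 2) = p * q - 1] (mod (p * q))"
    and prim: "residue_primroot p a" and n_def: "n = ord q a"
begin

abbreviation "L x \<equiv> dlog p a x"
abbreviation "d b \<equiv> dlog q a b"
abbreviation "h \<equiv> (p - 1) div 2"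

lemma q_ge3: "q \<ge> 3" using q_odd q_gt by presburger
lemma p_gt2: "p > 2" using q_ge3 pq by simp
lemma p_odd: "odd p" using p_prime p_gt2 prime_odd_nat by blast
lemma h2: "2 * h = p - 1" using p_odd by (simp add: odd_two_times_div_two_nat)
lemma cop_p: "coprime p a" using cop by (simp add: coprime_commute)
lemma cop_q: "coprime q a" using cop by (simp add: coprime_commute)
lemma ordp: "ord p a = p - 1"
  using prim p_prime by (simp add: residue_primroot_def totient_prime)
lemma cop_pq: "coprime p q"
  using p_prime pq q_gt by (simp add: nat_dvd_not_less prime_imp_coprime_nat)

lemma hp: "[a ^ h = p - 1] (mod p)"
proof -
  have "[a ^ h = p * q - 1] (mod p)" using hyp cong_modulus_mult_nat by blast
  moreover have "p * q - 1 = (p - 1) + p * (q - 1)" using q_gt p_gt2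
    by (simp add: algebra_simps)
  hence "[p * q - 1 = p - 1] (mod p)" by (simp add: cong_def)
  ultimately show ?thesis using cong_trans by blast
qed

lemma hq: "[a ^ h = q - 1] (mod q)"
proof -
  have "[a ^ h = p * q - 1] (mod q)" using hyp cong_modulus_mult_nat by (metis mult.commute)
  moreover have "p * q - 1 = (q - 1) + q * (p - 1)" using q_gt p_gt2
    by (simp add: algebra_simps)
  hence "[p * q - 1 = q - 1] (mod q)" by (simp add: cong_def)
  ultimately show ?thesis using cong_trans by blast
qed


lemma aq1: "[a ^ (p - 1) = 1] (mod q)"
proof -
  have "[int a ^ h = int q - 1] (mod int q)" using hq q_gt
    by (metis cong_int_iff of_nat_1 of_nat_diff of_nat_power less_imp_le_nat)
  hence "[int a ^ h = - 1] (mod int q)"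
    by (metis cong_def diff_minus_eq_add minus_diff_eq mod_add_self1 uminus_add_conv_diff add.commute diff_add_cancel)
  hence "[(int a ^ h)^2 = (-1)^2] (mod int q)" by (rule cong_pow)
  hence "[int a ^ (p - 1) = 1] (mod int q)" using h2 by (simp add: power_mult[symmetric] mult.commute)
  thus ?thesis by (metis cong_int_iff of_nat_1 of_nat_power)
qed

lemma n_pos: "n > 0" using cop_q n_def by simp
lemma n_dvd: "n dvd p - 1" using aq1 n_def ord_divides by blast
lemma pow_q_iff: "[a ^ k = a ^ m] (mod q) \<longleftrightarrow> [k = m] (mod n)"
  using order_divides_expdiff[OF cop_q] n_def by simp
lemma pow_p_iff: "[a ^ k = a ^ m] (mod p) \<longleftrightarrow> [k = m] (mod (p - 1))"
  using order_divides_expdiff[OF cop_p] ordp by simp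

lemma L_prop: assumes "x \<in> {1..<p}" shows "[a ^ L x = x] (mod p)" "L x < p - 1"
proof -
  have gen: "bij_betw (\<lambda>i. a ^ i mod p) {..<totient p} (totatives p)"
    using residue_primroot_is_generator[OF _ prim] p_gt2 by simp
  have "x \<in> totatives p" using assms p_prime
    by (simp add: totatives_def prime_imp_coprime_nat nat_dvd_not_less coprime_commute)
  hence "x \<in> (\<lambda>i. a ^ i mod p) ` {..<p - 1}" using gen p_prime
    by (simp add: bij_betw_def totient_prime)
  then obtain i where i: "i < p - 1" "a ^ i mod p = x" by auto
  hence ci: "[a ^ i = x] (mod p)" using assms by (simp add: cong_def)
  show "[a ^ L x = x] (mod p)" unfolding dlog_def by (rule LeastI[of _ i], fact ci)
  have "L x \<le> i" unfolding dlog_def by (rule Least_le, fact ci)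
  thus "L x < p - 1" using i by simp
qed

lemma L_unique: assumes "k < p - 1" "[a ^ k = x] (mod p)" shows "L x = k"
proof -
  have c: "[a ^ L x = x] (mod p)" unfolding dlog_def by (rule LeastI[of _ k], fact)
  have le: "L x \<le> k" unfolding dlog_def by (rule Least_le, fact)
  have "[a ^ L x = a ^ k] (mod p)" using c assms(2) cong_sym cong_trans by blast
  hence "[L x = k] (mod (p - 1))" using pow_p_iff by simp
  thus ?thesis using le assms(1) cong_less_modulus_unique_nat by simp
qed

lemma L_pow: "L (a ^ k mod p) = k mod (p - 1)"
proof (rule L_unique)
  show "k mod (p - 1) < p - 1" using p_gt2 by simp
  have "[k mod (p - 1) = k] (mod (p - 1))" by (simp add: cong_def)
  hence "[a ^ (k mod (p - 1)) = a ^ k] (mod p)" using pow_p_iff by blast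
  thus "[a ^ (k mod (p - 1)) = a ^ k mod p] (mod p)" by (simp add: cong_def)
qed

lemma L_1: "L 1 = 0" using L_unique[of 0 1] p_gt2 by simp
lemma L_m1: "L (p - 1) = h" using L_unique[OF _ hp] h2 p_gt2 by simp

lemma cyc_mem: "b \<in> cyc q a \<longleftrightarrow> (\<exists>k. b = a ^ k mod q)" by (auto simp: cyc_def)

lemma cyc_prop: assumes "b \<in> cyc q a"
  shows "[a ^ d b = b] (mod q)" "d b < n" "b = a ^ d b mod q" "0 < b" "b < q"
proof -
  obtain k where k: "b = a ^ k mod q" using assms cyc_mem by auto
  have "[k mod n = k] (mod n)" by (simp add: cong_def)
  hence "[a ^ (k mod n) = a ^ k] (mod q)" using pow_q_iff by blast
  hence ck: "[a ^ (k mod n) = b] (mod q)" using k by (simp add: cong_def)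
  show c: "[a ^ d b = b] (mod q)" unfolding dlog_def by (rule LeastI[of _ "k mod n"], fact ck)
  have "d b \<le> k mod n" unfolding dlog_def by (rule Least_le, fact ck)
  thus "d b < n" using n_pos by (meson le_less_trans mod_less_divisor)
  show "b < q" using k q_gt by simp
  thus "b = a ^ d b mod q" using c by (simp add: cong_def)
  have "coprime (a ^ k) q" using cop_q by (simp add: coprime_commute)
  hence "coprime b q" using k by (metis coprime_mod_left_iff q_gt not_one_less_zero bot_nat_0.not_eq_extremum)
  thus "0 < b" using q_gt by (cases "b = 0") auto
qed

lemma cyc_pow: "a ^ k mod q \<in> cyc q a" by (auto simp: cyc_def)

lemma d_eq_iff: assumes "b \<in> cyc q a" "c \<in> cyc q a" shows "[d b = d c] (mod n) \<longleftrightarrow> b = c"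
  using cyc_prop[OF assms(1)] cyc_prop[OF assms(2)] pow_q_iff by (metis cong_def)

lemma d_pow_iff: assumes "b \<in> cyc q a" shows "[d b = k] (mod n) \<longleftrightarrow> a ^ k mod q = b"
  using cyc_prop[OF assms] pow_q_iff by (metis cong_def)


lemma ah1: "[a ^ h + 1 = 0] (mod q)"
proof -
  have "[a ^ h + 1 = (q - 1) + 1] (mod q)" using hq cong_add cong_refl by blast
  thus ?thesis using q_gt by (simp add: cong_def)
qed

lemma neg_cyc: assumes "c \<in> cyc q a" shows "q - c \<in> cyc q a"
proof -
  note cp = cyc_prop[OF assms]
  have "[a ^ (h + d c) + a ^ d c = (a ^ h + 1) * a ^ d c] (mod q)" by (simp add: power_add algebra_simps)
  also have "[(a ^ h + 1) * a ^ d c = 0 * a ^ d c] (mod q)" using ah1 cong_mult cong_refl by blast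
  finally have "[a ^ (h + d c) + a ^ d c = 0] (mod q)" by simp
  hence "[a ^ (h + d c) + c = 0] (mod q)" using cp(1) by (metis cong_add_lcancel_nat cong_add cong_refl cong_trans cong_sym)
  hence "(a ^ (h + d c) mod q + c) mod q = 0" by (simp add: cong_def mod_add_left_eq)
  hence "q dvd (a ^ (h + d c) mod q + c)" by auto
  then obtain k where k: "a ^ (h + d c) mod q + c = q * k" by auto
  have "a ^ (h + d c) mod q < q" using q_gt by simp
  hence "q * k < q * 2" using k cp(5) by linarith
  hence "k < 2" by simp
  moreover have "k \<noteq> 0" using k cp(4) by (metis add_is_0 mult_0_right neq0_conv)
  ultimately have "k = 1" by simp
  hence "a ^ (h + d c) mod q = q - c" using k by simp
  thus ?thesis using cyc_pow by metis
qed




abbreviation "w \<equiv> exp (2 * complex_of_real pi * \<i> / of_nat n)"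

lemma exp_w: "exp (2 * complex_of_real pi * \<i> * of_nat k / of_nat n) = w ^ k"
proof -
  have "2 * complex_of_real pi * \<i> * of_nat k / of_nat n = of_nat k * (2 * complex_of_real pi * \<i> / of_nat n)"
    by (simp add: divide_inverse ac_simps)
  thus ?thesis by (simp only: exp_of_nat_mult)
qed

lemma chi_eq: "chi p a n x = w ^ L x" unfolding chi_def by (rule exp_w)
lemma psi_eq: "psi q a n b = w ^ d b" unfolding psi_def by (rule exp_w)

lemma w_pow_1: "w ^ k = 1 \<longleftrightarrow> n dvd k"
  using complex_root_unity_eq_1[of n k] n_pos exp_w[of k] by simp
lemma w_n: "w ^ n = 1" using w_pow_1 by simp
lemma w_nz: "w \<noteq> 0" by simp
lemma w_mod: "w ^ k = w ^ (k mod n)"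
proof -
  have "w ^ k = w ^ (n * (k div n) + k mod n)" by simp
  also have "\<dots> = (w ^ n) ^ (k div n) * w ^ (k mod n)" by (simp only: power_add power_mult)
  finally show ?thesis using w_n by simp
qed
lemma w_eq: "w ^ k = w ^ m \<longleftrightarrow> [k = m] (mod n)"
proof -
  have key: "w ^ k = w ^ m \<longleftrightarrow> k = m" if "k < n" "m < n" "k \<le> m" for k m
  proof
    assume e: "w ^ k = w ^ m"
    have "w ^ m = w ^ k * w ^ (m - k)" using that by (simp add: power_add[symmetric])
    hence "w ^ (m - k) = 1" using e w_nz by simp
    hence "n dvd m - k" using w_pow_1 by simp
    moreover have "m - k < n" using that by simp
    ultimately have "m - k = 0" by (metis dvd_imp_le not_less neq0_conv)
    thus "k = m" using that by simp
  qed simp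
  have "w ^ k = w ^ m \<longleftrightarrow> w ^ (k mod n) = w ^ (m mod n)" using w_mod by metis
  also have "\<dots> \<longleftrightarrow> k mod n = m mod n"
  proof (cases "k mod n \<le> m mod n")
    case True thus ?thesis using key[of "k mod n" "m mod n"] n_pos by simp
  next
    case False thus ?thesis using key[of "m mod n" "k mod n"] n_pos by auto
  qed
  finally show ?thesis by (simp add: cong_def)
qed

lemma ortho: "(\<Sum>i<n. (w ^ A * inverse (w ^ B)) ^ i) = (if [A = B] (mod n) then of_nat n else 0)"
proof -
  define z where "z = w ^ A * inverse (w ^ B)"
  have z1: "z = 1 \<longleftrightarrow> [A = B] (mod n)" unfolding z_def using w_eq[of A B] w_nz
    by (metis divide_inverse divide_self_if power_not_zero right_inverse_eq)
  have zn: "z ^ n = 1" unfolding z_def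
    by (simp add: power_mult_distrib power_inverse power_mult[symmetric] mult.commute[of _ n] power_mult w_n)
  show ?thesis
  proof (cases "[A = B] (mod n)")
    case True thus ?thesis using z1 by (simp add: z_def[symmetric])
  next
    case False thus ?thesis using z1 zn by (simp add: z_def[symmetric] sum_gp_strict)
  qed
qed

lemma cnj_w: "cnj w = inverse w"
proof -
  have "cnj (2 * complex_of_real pi * \<i> / of_nat n) = - (2 * complex_of_real pi * \<i> / of_nat n)" by simp
  hence "cnj w = exp (- (2 * complex_of_real pi * \<i> / of_nat n))" by (metis exp_cnj)
  thus ?thesis by (simp add: exp_minus)
qed

lemma root_conj: fixes z :: complex assumes "z ^ n = 1" "i \<le> n" shows "z ^ (n - i) = inverse (z ^ i)"
proof -
  have "z ^ (n - i) * z ^ i = 1" using assms by (metis le_add_diff_inverse2 power_add)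
  thus ?thesis by (metis inverse_unique mult.commute)
qed

lemma root_mod: fixes z :: complex assumes "z ^ n = 1" "i < n" shows "z ^ ((n - i) mod n) = inverse (z ^ i)"
proof (cases "i = 0")
  case True thus ?thesis by simp
next
  case False thus ?thesis using assms root_conj[OF assms(1)] by simp
qed

lemma wpow_n: "(w ^ k) ^ n = 1" by (simp add: power_mult[symmetric] mult.commute[of k] power_mult w_n)


lemma B_aux: assumes "2 \<le> b" "b < q" shows "(b + q - 1) mod q = b - 1"
proof -
  have e: "b + q - 1 = (b - 1) + q" using assms by simp
  have "((b - 1) + q) mod q = b - 1" using assms by (simp only: mod_add_self2) simp
  thus ?thesis by (simp only: e)
qed

lemma B_char: "b \<in> Bset q a \<longleftrightarrow> b \<in> cyc q a \<and> 2 \<le> b \<and> b - 1 \<in> cyc q a"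
proof
  assume b: "b \<in> Bset q a"
  hence bc: "b \<in> cyc q a" and c: "(b + q - 1) mod q \<in> cyc q a" unfolding Bset_def by blast+
  have bq: "b < q" "0 < b" using cyc_prop(4,5)[OF bc] by auto
  have "b \<noteq> 1"
  proof
    assume "b = 1" hence "(b + q - 1) mod q = 0" by simp
    thus False using cyc_prop(4)[OF c] by simp
  qed
  hence b2: "2 \<le> b" using bq by simp
  show "b \<in> cyc q a \<and> 2 \<le> b \<and> b - 1 \<in> cyc q a" using bc c b2 B_aux[OF b2 bq(1)] by simp
next
  assume *: "b \<in> cyc q a \<and> 2 \<le> b \<and> b - 1 \<in> cyc q a"
  hence "b < q" using cyc_prop(5) by blast
  thus "b \<in> Bset q a" unfolding Bset_def using * B_aux by simp
qed

lemma B_fin: "finite (Bset q a)"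
proof (rule finite_subset[of _ "{..<q}"])
  show "Bset q a \<subseteq> {..<q}" using cyc_prop(5) unfolding Bset_def by blast
qed simp

lemma B_inv: assumes "b \<in> Bset q a"
  shows "q + 1 - b \<in> Bset q a" "q + 1 - (q + 1 - b) = b" "(q + 1 - b) mod q = q + 1 - b"
proof -
  have bc: "b \<in> cyc q a" "2 \<le> b" "b - 1 \<in> cyc q a" using assms unfolding B_char by blast+
  have bq: "b < q" using cyc_prop(5)[OF bc(1)] .
  have e1: "q - (b - 1) = q + 1 - b" using bc bq by simp
  have e2: "q - b = q + 1 - b - 1" using bq by simp
  have "q + 1 - b \<in> cyc q a" using neg_cyc[OF bc(3)] unfolding e1 .
  moreover have "q + 1 - b - 1 \<in> cyc q a" using neg_cyc[OF bc(1)] unfolding e2 .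
  moreover have "2 \<le> q + 1 - b" using bq by simp
  ultimately show "q + 1 - b \<in> Bset q a" unfolding B_char by blast
  show "q + 1 - (q + 1 - b) = b" using bq by simp
  show "(q + 1 - b) mod q = q + 1 - b" using bc bq by simp
qed




lemma mod_sum_1: fixes u v :: nat assumes "0 < u" "u < q" "0 < v" "v < q"
  shows "(u + v) mod q = 1 \<longleftrightarrow> u + v = q + 1"
proof
  assume *: "(u + v) mod q = 1"
  show "u + v = q + 1"
  proof (cases "u + v < q")
    case True thus ?thesis using * assms by simp
  next
    case False
    hence "(u + v) mod q = u + v - q" using assms by (simp add: le_mod_geq)
    thus ?thesis using * False by simp
  qed
next
  assume "u + v = q + 1" thus "(u + v) mod q = 1" using q_gt by (simp add: mod_Suc)
qed

definition T where "T = {x \<in> {2..<p}. [a ^ L x + a ^ L (p + 1 - x) = 1] (mod q)}"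

lemma cond_iff: 
  "[a ^ L x + a ^ L y = 1] (mod q) \<longleftrightarrow> (a ^ L x mod q \<in> Bset q a \<and> a ^ L y mod q = q + 1 - a ^ L x mod q)"
proof -
  define u where "u = a ^ L x mod q"
  define v where "v = a ^ L y mod q"
  have uc: "u \<in> cyc q a" "v \<in> cyc q a" unfolding u_def v_def by (rule cyc_pow)+
  note up = cyc_prop[OF uc(1)] and vp = cyc_prop[OF uc(2)]
  have "[a ^ L x + a ^ L y = 1] (mod q) \<longleftrightarrow> (u + v) mod q = 1"
    unfolding cong_def u_def v_def using q_gt by (simp add: mod_add_eq)
  also have "\<dots> \<longleftrightarrow> u + v = q + 1" using mod_sum_1 up(4,5) vp(4,5) by blast
  also have "\<dots> \<longleftrightarrow> (u \<in> Bset q a \<and> v = q + 1 - u)"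
  proof
    assume e: "u + v = q + 1"
    have "u - 1 = q - v" using e by simp
    hence "u - 1 \<in> cyc q a" using neg_cyc[OF uc(2)] by simp
    moreover have "2 \<le> u" using e vp(5) by simp
    ultimately show "u \<in> Bset q a \<and> v = q + 1 - u" unfolding B_char using uc e by simp
  next
    assume "u \<in> Bset q a \<and> v = q + 1 - u"
    thus "u + v = q + 1" using up(5) by simp
  qed
  finally show ?thesis unfolding u_def v_def .
qed

lemma indicator_B:
  "(if [a ^ L x + a ^ L y = 1] (mod q) then 1 else 0 :: complex) =
   (\<Sum>b\<in>Bset q a. if a ^ L x mod q = b \<and> a ^ L y mod q = q + 1 - b then 1 else 0)"
proof -
  have "(\<Sum>b\<in>Bset q a. (if a ^ L x mod q = b \<and> a ^ L y mod q = q + 1 - b then 1 else 0 :: complex))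
     = (\<Sum>b\<in>Bset q a. if b = a ^ L x mod q then (if a ^ L y mod q = q + 1 - a ^ L x mod q then 1 else 0) else 0)"
    by (rule sum.cong) auto
  also have "\<dots> = (if a ^ L x mod q \<in> Bset q a then (if a ^ L y mod q = q + 1 - a ^ L x mod q then 1 else 0) else 0)"
    using B_fin by (simp add: sum.delta)
  finally show ?thesis using cond_iff by simp
qed

lemma ortho_chi_psi: assumes "b \<in> cyc q a"
  shows "(\<Sum>i<n. chi p a n x ^ i * inverse (psi q a n b) ^ i) =
         (if a ^ L x mod q = b then of_nat n else 0)"
proof -
  have "(\<Sum>i<n. chi p a n x ^ i * inverse (psi q a n b) ^ i) = (\<Sum>i<n. (w ^ L x * inverse (w ^ d b)) ^ i)"
    by (simp add: chi_eq psi_eq power_mult_distrib)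
  also have "\<dots> = (if [L x = d b] (mod n) then of_nat n else 0)" by (rule ortho)
  also have "[L x = d b] (mod n) \<longleftrightarrow> a ^ L x mod q = b" using d_pow_iff[OF assms] cong_sym_eq by metis
  finally show ?thesis by simp
qed


lemma swap4:
  "(\<Sum>x\<in>A. \<Sum>b\<in>B. \<Sum>i\<in>I. \<Sum>j\<in>J. (f x b i j :: complex)) = (\<Sum>i\<in>I. \<Sum>j\<in>J. \<Sum>b\<in>B. \<Sum>x\<in>A. f x b i j)"
proof -
  have "(\<Sum>x\<in>A. \<Sum>b\<in>B. \<Sum>i\<in>I. \<Sum>j\<in>J. f x b i j) = (\<Sum>b\<in>B. \<Sum>x\<in>A. \<Sum>i\<in>I. \<Sum>j\<in>J. f x b i j)"
    by (rule sum.swap)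
  also have "\<dots> = (\<Sum>b\<in>B. \<Sum>i\<in>I. \<Sum>x\<in>A. \<Sum>j\<in>J. f x b i j)"
    by (rule sum.cong[OF refl], rule sum.swap)
  also have "\<dots> = (\<Sum>b\<in>B. \<Sum>i\<in>I. \<Sum>j\<in>J. \<Sum>x\<in>A. f x b i j)"
    by (rule sum.cong[OF refl], rule sum.cong[OF refl], rule sum.swap)
  also have "\<dots> = (\<Sum>i\<in>I. \<Sum>b\<in>B. \<Sum>j\<in>J. \<Sum>x\<in>A. f x b i j)"
    by (rule sum.swap)
  also have "\<dots> = (\<Sum>i\<in>I. \<Sum>j\<in>J. \<Sum>b\<in>B. \<Sum>x\<in>A. f x b i j)"
    by (rule sum.cong[OF refl], rule sum.swap)
  finally show ?thesis .
qed

definition K where "K i j = (\<Sum>x\<in>{2..<p}. chi p a n x ^ i * chi p a n (p + 1 - x) ^ j)"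

abbreviation "C i j \<equiv> c_coef q a n i j"

lemma step_B: "of_nat (n ^ 2 * card T) = (\<Sum>i<n. \<Sum>j<n. C i j * K i j)"
proof -
  let ?X = "{2..<p}" and ?B = "Bset q a"
  let ?A = "\<lambda>x b i. chi p a n x ^ i * inverse (psi q a n b) ^ i"
  let ?G = "\<lambda>x b j. chi p a n (p + 1 - x) ^ j * inverse (psi q a n (q + 1 - b)) ^ j"
  have "of_nat (n ^ 2 * card T) = (of_nat n) ^ 2 * (\<Sum>x\<in>?X. (if [a ^ L x + a ^ L (p + 1 - x) = 1] (mod q) then 1 else 0 :: complex))"
    unfolding T_def by (simp add: sum.inter_filter[symmetric])
  also have "\<dots> = (\<Sum>x\<in>?X. \<Sum>b\<in>?B. (of_nat n) ^ 2 * (if a ^ L x mod q = b \<and> a ^ L (p + 1 - x) mod q = q + 1 - b then 1 else 0))"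
    by (subst sum_distrib_left, rule sum.cong[OF refl], subst indicator_B, simp only: sum_distrib_left)
  also have "\<dots> = (\<Sum>x\<in>?X. \<Sum>b\<in>?B. (\<Sum>i<n. ?A x b i) * (\<Sum>j<n. ?G x b j))"
  proof (rule sum.cong[OF refl], rule sum.cong[OF refl])
    fix x b assume b: "b \<in> ?B"
    have bc: "b \<in> cyc q a" "q + 1 - b \<in> cyc q a" using b B_inv(1)[OF b] unfolding B_char by blast+
    show "(of_nat n) ^ 2 * (if a ^ L x mod q = b \<and> a ^ L (p + 1 - x) mod q = q + 1 - b then 1 else 0) =
          (\<Sum>i<n. ?A x b i) * (\<Sum>j<n. ?G x b j)"
      unfolding ortho_chi_psi[OF bc(1)] ortho_chi_psi[OF bc(2)] by (simp add: power2_eq_square)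
  qed
  also have "\<dots> = (\<Sum>x\<in>?X. \<Sum>b\<in>?B. \<Sum>i<n. \<Sum>j<n. ?A x b i * ?G x b j)"
    by (simp add: sum_product)
  also have "\<dots> = (\<Sum>i<n. \<Sum>j<n. \<Sum>b\<in>?B. \<Sum>x\<in>?X. ?A x b i * ?G x b j)"
    by (rule swap4)
  also have "\<dots> = (\<Sum>i<n. \<Sum>j<n. C i j * K i j)"
  proof (rule sum.cong[OF refl], rule sum.cong[OF refl])
    fix i j
    have "C i j = (\<Sum>b\<in>?B. inverse (psi q a n b) ^ i * inverse (psi q a n (q + 1 - b)) ^ j)"
      unfolding c_coef_def by (rule sum.cong[OF refl]) (metis B_inv(3))
    hence "C i j * K i j = (\<Sum>b\<in>?B. \<Sum>x\<in>?X. (inverse (psi q a n b) ^ i * inverse (psi q a n (q + 1 - b)) ^ j) *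
              (chi p a n x ^ i * chi p a n (p + 1 - x) ^ j))"
      unfolding K_def by (simp add: sum_product)
    also have "\<dots> = (\<Sum>b\<in>?B. \<Sum>x\<in>?X. ?A x b i * ?G x b j)"
      by (simp add: ac_simps)
    finally show "(\<Sum>b\<in>?B. \<Sum>x\<in>?X. ?A x b i * ?G x b j) = C i j * K i j" by simp
  qed
  finally show ?thesis .
qed


lemma chi_pow_val: assumes "0 < i" "i < n"
  shows "chi_pow p a n i x = (if x mod p = 0 then 0 else chi p a n (x mod p) ^ i)"
proof -
  have am: "a mod p \<in> {1..<p}"
  proof -
    have "a mod p \<noteq> 0"
    proof
      assume "a mod p = 0" hence "p dvd a" by (simp add: dvd_eq_mod_eq_0)
      hence "is_unit p" using cop_p coprime_absorb_left by blast
      thus False using p_gt2 by simp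
    qed
    thus ?thesis using p_gt2 by simp
  qed
  have "L (a mod p) = 1" using L_pow[of 1] p_gt2 by simp
  hence "chi p a n (a mod p) ^ i = w ^ i" by (simp add: chi_eq)
  also have "\<dots> \<noteq> 1" using w_pow_1 assms by (simp add: nat_dvd_not_less)
  finally have "\<not> (\<forall>y\<in>{1..<p}. chi p a n y ^ i = 1)" using am by blast
  thus ?thesis unfolding chi_pow_def char_ext_def by auto
qed

lemma step_C: assumes "0 < i" "i < n" "0 < j" "j < n"
  shows "jacobi p (chi_pow p a n i) (chi_pow p a n j) = K i j"
proof -
  have s: "{0..<p} = insert 0 (insert 1 {2..<p})" using p_gt2 by auto
  have "jacobi p (chi_pow p a n i) (chi_pow p a n j) =
     (\<Sum>c\<in>{2..<p}. chi_pow p a n i c * chi_pow p a n j ((p + 1 - c) mod p))"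
    unfolding jacobi_def s using p_gt2 by (simp add: chi_pow_val[OF assms(1,2)] chi_pow_val[OF assms(3,4)])
  also have "\<dots> = K i j" unfolding K_def
  proof (rule sum.cong[OF refl])
    fix c assume c: "c \<in> {2..<p}"
    hence e: "(p + 1 - c) mod p = p + 1 - c" "c mod p = c" by auto
    show "chi_pow p a n i c * chi_pow p a n j ((p + 1 - c) mod p) = chi p a n c ^ i * chi p a n (p + 1 - c) ^ j"
      unfolding e chi_pow_val[OF assms(1,2)] chi_pow_val[OF assms(3,4)] using c by simp
  qed
  finally show ?thesis .
qed




lemma count_res: assumes "0 < n" "n dvd m"
  shows "card {k. k < m \<and> [k = e] (mod n)} = m div n"
proof -
  have eq: "{k. k < m \<and> [k = e] (mod n)} = (\<lambda>t. e mod n + n * t) ` {..< m div n}"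
  proof (rule equalityI; rule subsetI)
    fix k assume k: "k \<in> {k. k < m \<and> [k = e] (mod n)}"
    hence "k mod n = e mod n" by (simp add: cong_def)
    hence "k = e mod n + n * (k div n)" by (metis div_mult_mod_eq add.commute mult.commute)
    moreover have "k div n < m div n" using k assms
      by (metis div_less_iff_less_mult dvd_div_mult_self mem_Collect_eq)
    ultimately show "k \<in> (\<lambda>t. e mod n + n * t) ` {..< m div n}" by blast
  next
    fix k assume "k \<in> (\<lambda>t. e mod n + n * t) ` {..< m div n}"
    then obtain t where t: "t < m div n" "k = e mod n + n * t" by auto
    have "e mod n < n" using assms by simp
    hence "k < n * (t + 1)" using t by simp
    also have "n * (t + 1) \<le> n * (m div n)" using t by (intro mult_le_mono2) simp
    also have "\<dots> = m" using assms by simp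
    finally show "k \<in> {k. k < m \<and> [k = e] (mod n)}" using t by (simp add: cong_def)
  qed
  have "inj_on (\<lambda>t. e mod n + n * t) {..< m div n}" using assms by (intro inj_onI) simp
  thus ?thesis unfolding eq by (simp add: card_image)
qed

lemma L_bij: "bij_betw (\<lambda>k. a ^ k mod p) {..<p - 1} {1..<p}"
proof -
  have "bij_betw (\<lambda>i. a ^ i mod p) {..<totient p} (totatives p)"
    using residue_primroot_is_generator[OF _ prim] p_gt2 by simp
  moreover have "totatives p = {1..<p}" using p_prime totatives_prime p_gt2 by auto
  ultimately show ?thesis using p_prime by (simp add: totient_prime)
qed

lemma count_L: "card {x \<in> {1..<p}. [L x = e] (mod n)} = (p - 1) div n"
proof -
  have "{x \<in> {1..<p}. [L x = e] (mod n)} = (\<lambda>k. a ^ k mod p) ` {k. k < p - 1 \<and> [k = e] (mod n)}"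
  proof (rule equalityI; rule subsetI)
    fix x assume x: "x \<in> {x \<in> {1..<p}. [L x = e] (mod n)}"
    hence "x = a ^ L x mod p" using L_prop[of x] by (simp add: cong_def)
    moreover have "L x < p - 1" using x L_prop by simp
    ultimately show "x \<in> (\<lambda>k. a ^ k mod p) ` {k. k < p - 1 \<and> [k = e] (mod n)}" using x by blast
  next
    fix x assume "x \<in> (\<lambda>k. a ^ k mod p) ` {k. k < p - 1 \<and> [k = e] (mod n)}"
    then obtain k where k: "k < p - 1" "[k = e] (mod n)" "x = a ^ k mod p" by auto
    have "L x = k" using k L_pow by simp
    moreover have "x \<in> {1..<p}" using L_bij k unfolding bij_betw_def by auto
    ultimately show "x \<in> {x \<in> {1..<p}. [L x = e] (mod n)}" using k by simp
  qed
  moreover have "inj_on (\<lambda>k. a ^ k mod p) {k. k < p - 1 \<and> [k = e] (mod n)}"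
    using bij_betw_imp_inj_on[OF L_bij] by (rule inj_on_subset) auto
  ultimately show ?thesis using count_res[OF n_pos n_dvd] by (simp add: card_image)
qed

lemma line_count:
  assumes g: "bij_betw g {2..<p} ({1..<p} - {y0})" and y0: "y0 \<in> {1..<p}"
    and c: "c \<in> cyc q a" and ne: "a ^ L y0 mod q \<noteq> c"
  shows "(\<Sum>x\<in>{2..<p}. if a ^ L (g x) mod q = c then (of_nat n :: complex) else 0) = of_nat (p - 1)"
proof -
  have P: "a ^ L y mod q = c \<longleftrightarrow> [L y = d c] (mod n)" for y
    using d_pow_iff[OF c] cong_sym_eq by metis
  have "(\<Sum>x\<in>{2..<p}. if a ^ L (g x) mod q = c then (of_nat n :: complex) else 0) =
        of_nat n * of_nat (card {x \<in> {2..<p}. a ^ L (g x) mod q = c})"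
    by (simp add: sum.inter_filter[symmetric])
  also have "card {x \<in> {2..<p}. a ^ L (g x) mod q = c} = card {y \<in> {1..<p} - {y0}. a ^ L y mod q = c}"
  proof -
    have "g ` {x \<in> {2..<p}. a ^ L (g x) mod q = c} = {y \<in> g ` {2..<p}. a ^ L y mod q = c}" by auto
    also have "g ` {2..<p} = {1..<p} - {y0}" using g by (simp add: bij_betw_def)
    finally have img: "g ` {x \<in> {2..<p}. a ^ L (g x) mod q = c} = {y \<in> {1..<p} - {y0}. a ^ L y mod q = c}" .
    have "inj_on g {x \<in> {2..<p}. a ^ L (g x) mod q = c}"
      using bij_betw_imp_inj_on[OF g] by (rule inj_on_subset) auto
    hence "card (g ` {x \<in> {2..<p}. a ^ L (g x) mod q = c}) = card {x \<in> {2..<p}. a ^ L (g x) mod q = c}"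
      by (rule card_image)
    thus ?thesis unfolding img by simp
  qed
  also have "{y \<in> {1..<p} - {y0}. a ^ L y mod q = c} = {y \<in> {1..<p}. a ^ L y mod q = c}"
    using ne by blast
  also have "\<dots> = {y \<in> {1..<p}. [L y = d c] (mod n)}" by (simp only: P)
  also have "card \<dots> = (p - 1) div n" by (rule count_L)
  also have "(of_nat n :: complex) * of_nat ((p - 1) div n) = of_nat (p - 1)"
    using n_dvd by (metis dvd_mult_div_cancel of_nat_mult)
  finally show ?thesis .
qed




definition g3 where "g3 x = a ^ (L x + (p - 1) - L (p + 1 - x)) mod p"

lemma ap1: "[a ^ (p - 1) = 1] (mod p)" using ord[of a p] ordp by simp

lemma g3_rel: assumes x: "x \<in> {2..<p}" shows "[g3 x * (p + 1 - x) = x] (mod p)"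
proof -
  let ?y = "p + 1 - x"
  have y: "?y \<in> {1..<p}" using x by auto
  have x1: "x \<in> {1..<p}" using x by auto
  have ly: "L ?y < p - 1" using L_prop(2)[OF y] .
  have "[g3 x * ?y = a ^ (L x + (p - 1) - L ?y) * a ^ L ?y] (mod p)"
    unfolding g3_def using L_prop(1)[OF y] by (intro cong_mult) (auto simp: cong_def cong_sym_eq)
  also have "a ^ (L x + (p - 1) - L ?y) * a ^ L ?y = a ^ L x * a ^ (p - 1)"
    using ly by (simp add: power_add[symmetric])
  also have "[a ^ L x * a ^ (p - 1) = x * 1] (mod p)" using L_prop(1)[OF x1] ap1 by (rule cong_mult)
  finally show ?thesis by simp
qed

lemma g3_range: assumes x: "x \<in> {2..<p}" shows "g3 x \<in> {1..<p} - {p - 1}"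
proof -
  have "g3 x < p" unfolding g3_def using p_gt2 by simp
  moreover have "g3 x \<noteq> 0"
  proof
    assume "g3 x = 0"
    hence "[x = 0] (mod p)" using g3_rel[OF x] by (metis cong_sym cong_trans mult_0 cong_refl)
    thus False using x by (simp add: cong_def)
  qed
  moreover have "g3 x \<noteq> p - 1"
  proof
    assume e: "g3 x = p - 1"
    have "[int (g3 x) * (int p + 1 - int x) = int x] (mod int p)"
      using g3_rel[OF x] x by (metis cong_int_iff of_nat_mult of_nat_diff of_nat_add of_nat_1 less_imp_le_nat
          atLeastLessThan_iff le_SucI add.commute Suc_eq_plus1)
    hence "[(int p - 1) * (int p + 1 - int x) = int x] (mod int p)" using e p_gt2 by simp
    hence "int p dvd int x - (int p - 1) * (int p + 1 - int x)" by (simp add: cong_iff_dvd_diff dvd_diff_commute)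
    moreover have "int x - (int p - 1) * (int p + 1 - int x) = int p * (int x - int p) + 1"
      by (simp add: algebra_simps)
    ultimately have "int p dvd 1" by (metis dvd_add_right_iff dvd_triv_left)
    thus False using p_gt2 by simp
  qed
  ultimately show ?thesis by auto
qed

lemma g3_inj: "inj_on g3 {2..<p}"
proof (rule inj_onI)
  fix x x' assume x: "x \<in> {2..<p}" and x': "x' \<in> {2..<p}" and e: "g3 x = g3 x'"
  have r: "[int (g3 x) * (int p + 1 - int x) = int x] (mod int p)" if "x \<in> {2..<p}" for x
    using g3_rel[OF that] that by (metis cong_int_iff of_nat_mult of_nat_diff of_nat_add of_nat_1 less_imp_le_nat
          atLeastLessThan_iff le_SucI add.commute Suc_eq_plus1)
  define t where "t = int (g3 x)"
  have r1: "int p dvd int x - t * (int p + 1 - int x)" using r[OF x] unfolding t_def by (simp add: cong_iff_dvd_diff dvd_diff_commute)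
  have r2: "int p dvd int x' - t * (int p + 1 - int x')" using r[OF x'] e unfolding t_def by (simp add: cong_iff_dvd_diff dvd_diff_commute)
  have "int p dvd (int p + 1 - int x') * (int x - t * (int p + 1 - int x)) - (int p + 1 - int x) * (int x' - t * (int p + 1 - int x'))"
    by (rule dvd_diff[OF dvd_mult[OF r1] dvd_mult[OF r2]])
  moreover have "(int p + 1 - int x') * (int x - t * (int p + 1 - int x)) - (int p + 1 - int x) * (int x' - t * (int p + 1 - int x'))
      = int p * (int x - int x') + (int x - int x')" by (simp add: algebra_simps)
  ultimately have "int p dvd int x - int x'" by (metis dvd_add_right_iff dvd_triv_left)
  hence "[x = x'] (mod p)" by (metis cong_iff_dvd_diff cong_int_iff cong_sym_eq)
  thus "x = x'" using x x' cong_less_modulus_unique_nat by auto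
qed

lemma g3_bij: "bij_betw g3 {2..<p} ({1..<p} - {p - 1})"
proof -
  have sub: "g3 ` {2..<p} \<subseteq> {1..<p} - {p - 1}" using g3_range by auto
  have "card (g3 ` {2..<p}) = card ({1..<p} - {p - 1})"
    using card_image[OF g3_inj] p_gt2 by simp
  hence "g3 ` {2..<p} = {1..<p} - {p - 1}" using sub by (intro card_subset_eq) auto
  thus ?thesis using g3_inj by (simp add: bij_betw_def)
qed

lemma g1_bij: "bij_betw (\<lambda>x. p + 1 - x) {2..<p} ({1..<p} - {1})"
  by (rule bij_betwI[where g = "\<lambda>x. p + 1 - x"]) auto

lemma g2_bij: "bij_betw (\<lambda>x. x) {2..<p} ({1..<p} - {1})"
  by (rule bij_betwI[where g = "\<lambda>x. x"]) auto




lemma swap3: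
  "(\<Sum>j\<in>J. \<Sum>b\<in>B. \<Sum>x\<in>A. (f j b x :: complex)) = (\<Sum>b\<in>B. \<Sum>x\<in>A. \<Sum>j\<in>J. f j b x)"
proof -
  have "(\<Sum>j\<in>J. \<Sum>b\<in>B. \<Sum>x\<in>A. f j b x) = (\<Sum>b\<in>B. \<Sum>j\<in>J. \<Sum>x\<in>A. f j b x)" by (rule sum.swap)
  also have "\<dots> = (\<Sum>b\<in>B. \<Sum>x\<in>A. \<Sum>j\<in>J. f j b x)" by (rule sum.cong[OF refl], rule sum.swap)
  finally show ?thesis .
qed

lemma C_unmod: "C i j = (\<Sum>b\<in>Bset q a. inverse (psi q a n b) ^ i * inverse (psi q a n (q + 1 - b)) ^ j)"
  unfolding c_coef_def by (rule sum.cong[OF refl]) (metis B_inv(3))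

lemma B_cyc: assumes "b \<in> Bset q a" shows "b \<in> cyc q a" "q + 1 - b \<in> cyc q a" "2 \<le> b" "b < q" "2 \<le> q + 1 - b"
  using assms B_inv(1)[OF assms] unfolding B_char by (auto dest: cyc_prop(5))

lemma a_L1: "a ^ L 1 mod q = 1" using L_1 q_gt by simp

lemma line1: "(\<Sum>j<n. C 0 j * K 0 j) = of_nat (card (Bset q a) * (p - 1))"
proof -
  have "(\<Sum>j<n. C 0 j * K 0 j) = (\<Sum>j<n. \<Sum>b\<in>Bset q a. \<Sum>x\<in>{2..<p}.
           chi p a n (p + 1 - x) ^ j * inverse (psi q a n (q + 1 - b)) ^ j)"
    unfolding C_unmod K_def by (simp add: sum_product mult.commute)
  also have "\<dots> = (\<Sum>b\<in>Bset q a. \<Sum>x\<in>{2..<p}. \<Sum>j<n.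
           chi p a n (p + 1 - x) ^ j * inverse (psi q a n (q + 1 - b)) ^ j)" by (rule swap3)
  also have "\<dots> = (\<Sum>b\<in>Bset q a. of_nat (p - 1))"
  proof (rule sum.cong[OF refl])
    fix b assume b: "b \<in> Bset q a"
    have "(\<Sum>x\<in>{2..<p}. \<Sum>j<n. chi p a n (p + 1 - x) ^ j * inverse (psi q a n (q + 1 - b)) ^ j)
        = (\<Sum>x\<in>{2..<p}. if a ^ L (p + 1 - x) mod q = q + 1 - b then of_nat n else 0)"
      by (simp only: ortho_chi_psi[OF B_cyc(2)[OF b]])
    also have "\<dots> = of_nat (p - 1)"
      by (rule line_count[OF g1_bij _ B_cyc(2)[OF b]]) (use p_gt2 a_L1 B_cyc(5)[OF b] in auto)
    finally show "(\<Sum>x\<in>{2..<p}. \<Sum>j<n. chi p a n (p + 1 - x) ^ j * inverse (psi q a n (q + 1 - b)) ^ j) = of_nat (p - 1)" .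
  qed
  finally show ?thesis by simp
qed

lemma line2: "(\<Sum>i<n. C i 0 * K i 0) = of_nat (card (Bset q a) * (p - 1))"
proof -
  have "(\<Sum>i<n. C i 0 * K i 0) = (\<Sum>i<n. \<Sum>b\<in>Bset q a. \<Sum>x\<in>{2..<p}.
           chi p a n x ^ i * inverse (psi q a n b) ^ i)"
    unfolding C_unmod K_def by (simp add: sum_product mult.commute)
  also have "\<dots> = (\<Sum>b\<in>Bset q a. \<Sum>x\<in>{2..<p}. \<Sum>i<n.
           chi p a n x ^ i * inverse (psi q a n b) ^ i)" by (rule swap3)
  also have "\<dots> = (\<Sum>b\<in>Bset q a. of_nat (p - 1))"
  proof (rule sum.cong[OF refl])
    fix b assume b: "b \<in> Bset q a"
    have "(\<Sum>x\<in>{2..<p}. \<Sum>i<n. chi p a n x ^ i * inverse (psi q a n b) ^ i)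
        = (\<Sum>x\<in>{2..<p}. if a ^ L x mod q = b then of_nat n else 0)"
      by (simp only: ortho_chi_psi[OF B_cyc(1)[OF b]])
    also have "\<dots> = of_nat (p - 1)"
      by (rule line_count[OF g2_bij _ B_cyc(1)[OF b]]) (use p_gt2 a_L1 B_cyc(3)[OF b] in auto)
    finally show "(\<Sum>x\<in>{2..<p}. \<Sum>i<n. chi p a n x ^ i * inverse (psi q a n b) ^ i) = of_nat (p - 1)" .
  qed
  finally show ?thesis by simp
qed




lemma negpow: "[a ^ (h + k) + a ^ k = 0] (mod q)"
proof -
  have "[a ^ (h + k) + a ^ k = (a ^ h + 1) * a ^ k] (mod q)" by (simp add: power_add algebra_simps)
  also have "[(a ^ h + 1) * a ^ k = 0 * a ^ k] (mod q)" using ah1 cong_mult cong_refl by blast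
  finally show ?thesis by simp
qed

lemma arith3:
  fixes X Y U V M :: nat
  assumes "Y \<le> X + M" "V \<le> n" "n dvd M"
  shows "[X + M - Y = U + (n - V)] (mod n) \<longleftrightarrow> [X + V = Y + U] (mod n)"
proof -
  obtain k where k: "M = n * k" using assms(3) by auto
  have "[X + M - Y = U + (n - V)] (mod n) \<longleftrightarrow> [int (X + M - Y) = int (U + (n - V))] (mod int n)"
    by (rule cong_int_iff[symmetric])
  also have "\<dots> \<longleftrightarrow> int n dvd (int X + int M - int Y) - (int U + int n - int V)"
    using assms by (simp add: cong_iff_dvd_diff dvd_diff_commute of_nat_diff)
  also have "(int X + int M - int Y) - (int U + int n - int V) = ((int X + int V) - (int Y + int U)) + int n * (int k - 1)"
    using k by (simp add: algebra_simps)
  also have "int n dvd \<dots> \<longleftrightarrow> int n dvd (int X + int V) - (int Y + int U)"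
    by (simp add: dvd_add_left_iff)
  also have "\<dots> \<longleftrightarrow> [int (X + V) = int (Y + U)] (mod int n)"
    by (simp add: cong_iff_dvd_diff dvd_diff_commute)
  also have "\<dots> \<longleftrightarrow> [X + V = Y + U] (mod n)" by (rule cong_int_iff)
  finally show ?thesis .
qed

definition cb where "cb b = a ^ (d b + (n - d (q + 1 - b))) mod q"

lemma cond3: assumes x: "x \<in> {2..<p}" and b: "b \<in> Bset q a"
  shows "[L x + d (q + 1 - b) = L (p + 1 - x) + d b] (mod n) \<longleftrightarrow> a ^ L (g3 x) mod q = cb b"
proof -
  let ?y = "p + 1 - x" and ?b' = "q + 1 - b"
  let ?E = "L x + (p - 1) - L ?y"
  have y: "?y \<in> {1..<p}" using x by auto
  have ly: "L ?y < p - 1" using L_prop(2)[OF y] .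
  have db': "d ?b' < n" using cyc_prop(2)[OF B_cyc(2)[OF b]] .
  have hL: "L (g3 x) = ?E mod (p - 1)" unfolding g3_def by (rule L_pow)
  have "a ^ L (g3 x) mod q = cb b \<longleftrightarrow> [?E mod (p - 1) = d b + (n - d ?b')] (mod n)"
    unfolding cb_def hL[symmetric] using pow_q_iff by (simp add: cong_def)
  also have "[?E mod (p - 1) = d b + (n - d ?b')] (mod n) \<longleftrightarrow> [?E = d b + (n - d ?b')] (mod n)"
  proof -
    have "[?E mod (p - 1) = ?E] (mod n)" using n_dvd by (metis cong_dvd_modulus_nat cong_mod_left cong_refl)
    thus ?thesis using cong_sym cong_trans by blast
  qed
  also have "\<dots> \<longleftrightarrow> [L x + d ?b' = L ?y + d b] (mod n)"
    by (rule arith3) (use ly db' n_dvd in auto)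
  finally show ?thesis by simp
qed

lemma excl3: assumes b: "b \<in> Bset q a" shows "a ^ L (p - 1) mod q \<noteq> cb b"
proof
  let ?b' = "q + 1 - b"
  assume e: "a ^ L (p - 1) mod q = cb b"
  hence "[h = d b + (n - d ?b')] (mod n)" unfolding cb_def L_m1 using pow_q_iff by (simp add: cong_def)
  moreover have "d ?b' < n" using cyc_prop(2)[OF B_cyc(2)[OF b]] .
  ultimately have "[h + d ?b' = d b] (mod n)"
    using arith3[of 0 h 0 "d ?b'" "d b"] by simp
  hence "[a ^ (h + d ?b') = a ^ d b] (mod q)" using pow_q_iff by simp
  hence "[a ^ (h + d ?b') = b] (mod q)" using cyc_prop(1)[OF B_cyc(1)[OF b]] cong_trans by blast
  moreover have "[a ^ d ?b' = ?b'] (mod q)" using cyc_prop(1)[OF B_cyc(2)[OF b]] .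
  ultimately have "[a ^ (h + d ?b') + a ^ d ?b' = b + ?b'] (mod q)" by (rule cong_add)
  hence "[b + ?b' = 0] (mod q)" using negpow cong_sym cong_trans by blast
  moreover have "b + ?b' = q + 1" using B_cyc(4)[OF b] by simp
  ultimately show False using q_gt by (simp add: cong_def mod_Suc)
qed




lemma line3: "(\<Sum>i<n. C i ((n - i) mod n) * K i ((n - i) mod n)) = of_nat (card (Bset q a) * (p - 1))"
proof -
  let ?T = "\<lambda>i b x. (w ^ (L x + d (q + 1 - b)) * inverse (w ^ (L (p + 1 - x) + d b))) ^ i"
  have "(\<Sum>i<n. C i ((n - i) mod n) * K i ((n - i) mod n)) = (\<Sum>i<n. \<Sum>b\<in>Bset q a. \<Sum>x\<in>{2..<p}. ?T i b x)"
  proof (rule sum.cong[OF refl])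
    fix i assume i: "i \<in> {..<n}"
    have zc: "(inverse (psi q a n c)) ^ ((n - i) mod n) = psi q a n c ^ i" for c
    proof -
      have "(inverse (psi q a n c)) ^ n = 1" by (simp add: psi_eq power_inverse wpow_n)
      hence "(inverse (psi q a n c)) ^ ((n - i) mod n) = inverse (inverse (psi q a n c) ^ i)"
        using root_mod i by simp
      thus ?thesis by (simp add: power_inverse)
    qed
    have zx: "chi p a n y ^ ((n - i) mod n) = inverse (chi p a n y ^ i)" for y
      using root_mod[of "chi p a n y" i] i by (simp add: chi_eq wpow_n)
    have "C i ((n - i) mod n) * K i ((n - i) mod n) =
       (\<Sum>b\<in>Bset q a. inverse (psi q a n b) ^ i * psi q a n (q + 1 - b) ^ i) *
       (\<Sum>x\<in>{2..<p}. chi p a n x ^ i * inverse (chi p a n (p + 1 - x) ^ i))"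
      unfolding C_unmod K_def zc zx ..
    also have "\<dots> = (\<Sum>b\<in>Bset q a. \<Sum>x\<in>{2..<p}. (inverse (psi q a n b) ^ i * psi q a n (q + 1 - b) ^ i) *
       (chi p a n x ^ i * inverse (chi p a n (p + 1 - x) ^ i)))" by (simp add: sum_product)
    also have "\<dots> = (\<Sum>b\<in>Bset q a. \<Sum>x\<in>{2..<p}. ?T i b x)"
      by (intro sum.cong refl) (simp add: chi_eq psi_eq power_add power_mult_distrib power_inverse inverse_mult_distrib ac_simps)
    finally show "C i ((n - i) mod n) * K i ((n - i) mod n) = (\<Sum>b\<in>Bset q a. \<Sum>x\<in>{2..<p}. ?T i b x)" .
  qed
  also have "\<dots> = (\<Sum>b\<in>Bset q a. \<Sum>x\<in>{2..<p}. \<Sum>i<n. ?T i b x)" by (rule swap3)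
  also have "\<dots> = (\<Sum>b\<in>Bset q a. of_nat (p - 1))"
  proof (rule sum.cong[OF refl])
    fix b assume b: "b \<in> Bset q a"
    have "(\<Sum>x\<in>{2..<p}. \<Sum>i<n. ?T i b x) = (\<Sum>x\<in>{2..<p}. if a ^ L (g3 x) mod q = cb b then of_nat n else 0)"
    proof (rule sum.cong[OF refl])
      fix x assume x: "x \<in> {2..<p}"
      show "(\<Sum>i<n. ?T i b x) = (if a ^ L (g3 x) mod q = cb b then of_nat n else 0)"
        unfolding ortho cond3[OF x b] ..
    qed
    also have "\<dots> = of_nat (p - 1)"
      by (rule line_count[OF g3_bij _ _ excl3[OF b]]) (use p_gt2 in \<open>auto simp: cb_def cyc_pow\<close>)
    finally show "(\<Sum>x\<in>{2..<p}. \<Sum>i<n. ?T i b x) = of_nat (p - 1)" .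
  qed
  finally show ?thesis by simp
qed




abbreviation "F i j \<equiv> C i j * K i j"

lemma C_symm: "C j i = C i j"
proof -
  let ?f = "\<lambda>b. inverse (psi q a n b) ^ j * inverse (psi q a n (q + 1 - b)) ^ i"
  have "C j i = (\<Sum>b\<in>Bset q a. ?f b)" by (rule C_unmod)
  also have "\<dots> = (\<Sum>b\<in>Bset q a. ?f (q + 1 - b))"
    by (rule sum.reindex_bij_witness[where i = "\<lambda>b. q + 1 - b" and j = "\<lambda>b. q + 1 - b"])
       (auto simp: B_inv[simplified])
  also have "\<dots> = C i j" unfolding C_unmod
    by (rule sum.cong[OF refl]) (simp add: B_inv(2)[simplified] mult.commute)
  finally show ?thesis .
qed

lemma K_symm: "K j i = K i j"
proof -
  let ?f = "\<lambda>x. chi p a n x ^ j * chi p a n (p + 1 - x) ^ i"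
  have "K j i = (\<Sum>x\<in>{2..<p}. ?f x)" by (simp add: K_def)
  also have "\<dots> = (\<Sum>x\<in>{2..<p}. ?f (p + 1 - x))"
    by (rule sum.reindex_bij_witness[where i = "\<lambda>x. p + 1 - x" and j = "\<lambda>x. p + 1 - x"]) auto
  also have "\<dots> = K i j" unfolding K_def
    by (rule sum.cong[OF refl]) (simp add: mult.commute)
  finally show ?thesis .
qed

lemma F_symm: "F j i = F i j" by (simp add: C_symm K_symm)

lemma conj_pow: fixes z :: complex assumes "z ^ n = 1" "cnj z = inverse z" "i \<le> n"
  shows "z ^ (n - i) = cnj (z ^ i)"
  using root_conj[OF assms(1,3)] assms(2) by (simp add: power_inverse)

lemma cnj_wk: "cnj (w ^ k) = inverse (w ^ k)" by (metis cnj_w complex_cnj_power power_inverse)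

lemma C_conj: assumes "i \<le> n" "j \<le> n" shows "C (n - i) (n - j) = cnj (C i j)"
proof -
  have z: "inverse (psi q a n b) ^ (n - k) = cnj (inverse (psi q a n b) ^ k)" if "k \<le> n" for b k
  proof (rule conj_pow)
    show "inverse (psi q a n b) ^ n = 1" by (simp add: psi_eq power_inverse wpow_n)
    show "cnj (inverse (psi q a n b)) = inverse (inverse (psi q a n b))"
      by (simp only: psi_eq complex_cnj_inverse cnj_wk)
  qed (rule that)
  show ?thesis unfolding C_unmod z[OF assms(1)] z[OF assms(2)] by (simp add: cnj_sum)
qed

lemma K_conj: assumes "i \<le> n" "j \<le> n" shows "K (n - i) (n - j) = cnj (K i j)"
proof -
  have z: "chi p a n x ^ (n - k) = cnj (chi p a n x ^ k)" if "k \<le> n" for x k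
  proof (rule conj_pow)
    show "chi p a n x ^ n = 1" by (simp add: chi_eq wpow_n)
    show "cnj (chi p a n x) = inverse (chi p a n x)" by (simp only: chi_eq cnj_wk)
  qed (rule that)
  show ?thesis unfolding K_def z[OF assms(1)] z[OF assms(2)] by (simp add: cnj_sum)
qed

lemma F_conj: assumes "i \<le> n" "j \<le> n" shows "F (n - i) (n - j) = cnj (F i j)"
  using C_conj[OF assms] K_conj[OF assms] by simp

lemma F00: "F 0 0 = of_nat (card (Bset q a) * (p - 2))"
  unfolding C_unmod K_def using p_gt2 by simp




definition G :: "nat \<times> nat \<Rightarrow> complex" where "G z = F (fst z) (snd z)"

definition PP where "PP = {z \<in> {..<n} \<times> {..<n}. 0 < fst z \<and> 0 < snd z \<and> fst z + snd z < n}"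

lemma G_symm: "G (j, i) = G (i, j)" unfolding G_def using F_symm by simp

lemma split5:
  "(\<Sum>z\<in>{..<n} \<times> {..<n}. G z) =
     (\<Sum>z\<in>{z \<in> {..<n} \<times> {..<n}. fst z = 0}. G z)
   + (\<Sum>z\<in>{z \<in> {..<n} \<times> {..<n}. 0 < fst z \<and> snd z = 0}. G z)
   + (\<Sum>z\<in>{z \<in> {..<n} \<times> {..<n}. 0 < fst z \<and> 0 < snd z \<and> fst z + snd z = n}. G z)
   + (\<Sum>z\<in>PP. G z)
   + (\<Sum>z\<in>{z \<in> {..<n} \<times> {..<n}. 0 < fst z \<and> 0 < snd z \<and> n < fst z + snd z}. G z)"
proof -
  have "(\<Sum>z\<in>{..<n} \<times> {..<n}. G z) = (\<Sum>z\<in>{..<n} \<times> {..<n}.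
      (if fst z = 0 then G z else 0) + (if 0 < fst z \<and> snd z = 0 then G z else 0)
    + (if 0 < fst z \<and> 0 < snd z \<and> fst z + snd z = n then G z else 0)
    + (if 0 < fst z \<and> 0 < snd z \<and> fst z + snd z < n then G z else 0)
    + (if 0 < fst z \<and> 0 < snd z \<and> n < fst z + snd z then G z else 0))"
    by (rule sum.cong[OF refl]) auto
  thus ?thesis unfolding PP_def by (simp add: sum.distrib sum.inter_filter)
qed

lemma sumD1: "(\<Sum>z\<in>{z \<in> {..<n} \<times> {..<n}. fst z = 0}. G z) = (\<Sum>j<n. F 0 j)"
  by (rule sum.reindex_bij_witness[where i = "\<lambda>j. (0, j)" and j = snd]) (auto simp: G_def)

lemma sumD2: "(\<Sum>z\<in>{z \<in> {..<n} \<times> {..<n}. 0 < fst z \<and> snd z = 0}. G z) = (\<Sum>i\<in>{1..<n}. F i 0)"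
  by (rule sum.reindex_bij_witness[where i = "\<lambda>i. (i, 0)" and j = fst]) (auto simp: G_def)

lemma sumD3: "(\<Sum>z\<in>{z \<in> {..<n} \<times> {..<n}. 0 < fst z \<and> 0 < snd z \<and> fst z + snd z = n}. G z)
   = (\<Sum>i\<in>{1..<n}. F i (n - i))"
  by (rule sum.reindex_bij_witness[where i = "\<lambda>i. (i, n - i)" and j = fst]) (auto simp: G_def)

lemma sumQ: "(\<Sum>z\<in>{z \<in> {..<n} \<times> {..<n}. 0 < fst z \<and> 0 < snd z \<and> n < fst z + snd z}. G z)
   = (\<Sum>z\<in>PP. cnj (G z))"
proof -
  have "(\<Sum>z\<in>{z \<in> {..<n} \<times> {..<n}. 0 < fst z \<and> 0 < snd z \<and> n < fst z + snd z}. G z)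
     = (\<Sum>z\<in>PP. G (n - fst z, n - snd z))"
    unfolding PP_def
    by (rule sum.reindex_bij_witness[where i = "\<lambda>z. (n - fst z, n - snd z)" and j = "\<lambda>z. (n - fst z, n - snd z)"]) auto
  also have "\<dots> = (\<Sum>z\<in>PP. cnj (G z))"
    by (rule sum.cong[OF refl]) (auto simp: G_def PP_def F_conj)
  finally show ?thesis .
qed

lemma sumP_real: "(\<Sum>z\<in>PP. G z) + (\<Sum>z\<in>PP. cnj (G z)) = of_real (\<Sum>z\<in>PP. 2 * Re (G z))"
proof -
  have "(\<Sum>z\<in>PP. G z) + (\<Sum>z\<in>PP. cnj (G z)) = (\<Sum>z\<in>PP. G z + cnj (G z))" by (simp add: sum.distrib)
  also have "\<dots> = (\<Sum>z\<in>PP. of_real (2 * Re (G z)))" by (simp add: complex_add_cnj)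
  finally show ?thesis by simp
qed


lemma G_swap: "G (snd z, fst z) = G z" by (cases z) (simp add: G_symm)

lemma RS_eq: "(\<Sum>z\<in>PP. 2 * Re (G z)) =
  (\<Sum>i\<in>{1..<n}. \<Sum>j\<in>{i..<n - i}. 2 * (2 - (if i = j then 1 else 0)) * Re (F i j))"
proof -
  let ?R = "\<lambda>z. 2 * Re (G z)"
  let ?W = "\<lambda>z. 2 * (2 - (if fst z = snd z then 1 else 0)) * Re (G z)"
  have fin: "finite PP" unfolding PP_def by simp
  have sw: "(\<Sum>z\<in>PP. if snd z < fst z then ?R z else 0) = (\<Sum>z\<in>PP. if fst z < snd z then ?R z else 0)"
    unfolding PP_def
    by (rule sum.reindex_bij_witness[where i = "\<lambda>z. (snd z, fst z)" and j = "\<lambda>z. (snd z, fst z)"])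
       (auto simp: G_swap)
  have "(\<Sum>z\<in>PP. ?R z) = (\<Sum>z\<in>PP. ((if fst z < snd z then ?R z else 0) + (if fst z = snd z then ?R z else 0))
        + (if snd z < fst z then ?R z else 0))"
    by (rule sum.cong[OF refl]) auto
  also have "\<dots> = (\<Sum>z\<in>PP. (if fst z < snd z then ?R z else 0) + (if fst z = snd z then ?R z else 0))
        + (\<Sum>z\<in>PP. if snd z < fst z then ?R z else 0)"
    by (rule sum.distrib)
  also have "\<dots> = (\<Sum>z\<in>PP. (if fst z < snd z then ?R z else 0) + (if fst z = snd z then ?R z else 0))
        + (\<Sum>z\<in>PP. if fst z < snd z then ?R z else 0)" by (simp only: sw)
  also have "\<dots> = (\<Sum>z\<in>PP. ((if fst z < snd z then ?R z else 0) + (if fst z = snd z then ?R z else 0))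
        + (if fst z < snd z then ?R z else 0))"
    by (rule sum.distrib[symmetric])
  also have "\<dots> = (\<Sum>z\<in>PP. if fst z \<le> snd z then ?W z else 0)"
    by (rule sum.cong[OF refl]) auto
  also have "\<dots> = (\<Sum>z\<in>{z\<in>PP. fst z \<le> snd z}. ?W z)"
    using fin by (rule sum.inter_filter[symmetric])
  also have "{z\<in>PP. fst z \<le> snd z} = Sigma {1..<n} (\<lambda>i. {i..<n - i})"
    unfolding PP_def by auto
  also have "(\<Sum>z\<in>Sigma {1..<n} (\<lambda>i. {i..<n - i}). ?W z)
      = (\<Sum>(i, j)\<in>Sigma {1..<n} (\<lambda>i. {i..<n - i}). 2 * (2 - (if i = j then 1 else 0)) * Re (F i j))"
    by (rule sum.cong[OF refl]) (auto simp: G_def)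
  also have "\<dots> = (\<Sum>i\<in>{1..<n}. \<Sum>j\<in>{i..<n - i}. 2 * (2 - (if i = j then 1 else 0)) * Re (F i j))"
    by (rule sum.Sigma[symmetric]) auto
  finally show ?thesis .
qed




lemma main_sum: "(\<Sum>i<n. \<Sum>j<n. F i j) = of_real (real (p + 1) * real (card (Bset q a)) +
  (\<Sum>i\<in>{1..<n}. \<Sum>j\<in>{i..<n - i}. 2 * (2 - (if i = j then 1 else 0)) * Re (F i j)))"
proof -
  let ?RS = "(\<Sum>i\<in>{1..<n}. \<Sum>j\<in>{i..<n - i}. 2 * (2 - (if i = j then 1 else 0)) * Re (F i j))"
  let ?b = "card (Bset q a)"
  have ins: "{..<n} = insert 0 {1..<n}" using n_pos by auto
  have S: "(\<Sum>i<n. \<Sum>j<n. F i j) = (\<Sum>z\<in>{..<n} \<times> {..<n}. G z)"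
    unfolding G_def by (simp add: sum.cartesian_product case_prod_unfold)
  have l2: "(\<Sum>i\<in>{1..<n}. F i 0) = of_nat (?b * (p - 1)) - F 0 0"
    using line2 unfolding ins by (simp add: sum.insert eq_diff_eq add.commute)
  have l3: "(\<Sum>i\<in>{1..<n}. F i (n - i)) = of_nat (?b * (p - 1)) - F 0 0"
  proof -
    have "(\<Sum>i<n. F i ((n - i) mod n)) = F 0 0 + (\<Sum>i\<in>{1..<n}. F i ((n - i) mod n))"
      unfolding ins by (simp add: sum.insert)
    also have "(\<Sum>i\<in>{1..<n}. F i ((n - i) mod n)) = (\<Sum>i\<in>{1..<n}. F i (n - i))"
      by (rule sum.cong[OF refl]) auto
    finally show ?thesis using line3 by simp
  qed
  have "(\<Sum>i<n. \<Sum>j<n. F i j) = of_nat (?b * (p - 1)) + (of_nat (?b * (p - 1)) - F 0 0)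
      + (of_nat (?b * (p - 1)) - F 0 0) + of_real ?RS"
    unfolding S split5 sumD1 sumD2 sumD3 sumQ l2 l3 line1
    using sumP_real RS_eq by simp
  also have "\<dots> = of_real (real (p + 1) * real ?b + ?RS)"
    unfolding F00 using p_gt2 by (simp add: of_nat_diff algebra_simps)
  finally show ?thesis .
qed




lemma intp: "[int a ^ h = - 1] (mod int p)"
proof -
  have "[int a ^ h = int (p - 1)] (mod int p)" using hp by (metis cong_int_iff of_nat_power)
  hence "[int a ^ h = int p - 1] (mod int p)" using p_gt2 by (simp add: of_nat_diff)
  moreover have "[int p - 1 = - 1] (mod int p)" by (simp add: cong_iff_dvd_diff)
  ultimately show ?thesis by (rule cong_trans)
qed

lemma key_p: assumes x: "x \<in> {2..<p}"
  shows "[a ^ (h + L (p + 1 - x)) + 1 = x] (mod p)"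
proof -
  let ?y = "p + 1 - x"
  have y: "?y \<in> {1..<p}" using x by auto
  have "[int a ^ (h + L ?y) = int a ^ h * int a ^ L ?y] (mod int p)" by (simp add: power_add)
  also have "[int a ^ h * int a ^ L ?y = (- 1) * int ?y] (mod int p)"
    using intp L_prop(1)[OF y] by (intro cong_mult) (auto simp: cong_int_iff[symmetric])
  finally have c: "[int a ^ (h + L ?y) + 1 = (- 1) * int ?y + 1] (mod int p)" by (rule cong_add) simp
  have "(- 1) * int ?y + 1 = int x + int p * (- 1)" using x by (simp add: of_nat_diff)
  hence "[(- 1) * int ?y + 1 = int x] (mod int p)" by (simp add: cong_iff_dvd_diff)
  with c have "[int a ^ (h + L ?y) + 1 = int x] (mod int p)" by (rule cong_trans)
  hence "[int (a ^ (h + L ?y) + 1) = int x] (mod int p)" by (simp add: add.commute)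
  thus ?thesis by (simp only: cong_int_iff)
qed


lemma crt: "[u = v] (mod (p * q)) \<longleftrightarrow> [u = v] (mod p) \<and> [u = v] (mod q)"
  using cop_pq coprime_cong_mult_nat cong_modulus_mult_nat by (metis mult.commute)

lemma sh_iff: "s \<in> shift1 (p * q) (S_set (p * q) p a) \<longleftrightarrow> (\<exists>k<p - 1. s = (a ^ k + 1) mod (p * q))"
proof
  assume "s \<in> shift1 (p * q) (S_set (p * q) p a)"
  then obtain j where "j < p - 1" "s = (a ^ j mod (p * q) + 1) mod (p * q)"
    unfolding shift1_def S_set_def by blast
  moreover have "(a ^ j mod (p * q) + 1) mod (p * q) = (a ^ j + 1) mod (p * q)" by (rule mod_add_left_eq)
  ultimately show "\<exists>k<p - 1. s = (a ^ k + 1) mod (p * q)" by auto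
next
  assume "\<exists>k<p - 1. s = (a ^ k + 1) mod (p * q)"
  then obtain k where k: "k < p - 1" "s = (a ^ k + 1) mod (p * q)" by blast
  have "(a ^ k mod (p * q) + 1) mod (p * q) = (a ^ k + 1) mod (p * q)" by (rule mod_add_left_eq)
  hence e: "s = (a ^ k mod (p * q) + 1) mod (p * q)" using k(2) by simp
  have "a ^ k mod (p * q) \<in> S_set (p * q) p a" unfolding S_set_def using k by blast
  thus "s \<in> shift1 (p * q) (S_set (p * q) p a)" unfolding shift1_def using e by blast
qed

lemma e_inj: "inj_on (\<lambda>j. a ^ j mod p) {..<p - 1}" using L_bij by (simp add: bij_betw_def)

lemma e_range: "j < p - 1 \<Longrightarrow> a ^ j mod p \<in> {1..<p}" using L_bij by (auto simp: bij_betw_def)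

lemma not_p_dvd: "\<not> [a ^ k = 0] (mod p)"
proof
  assume "[a ^ k = 0] (mod p)"
  hence "p dvd a ^ k" by (simp add: cong_0_iff)
  hence "p dvd a" using p_prime prime_dvd_power by blast
  hence "is_unit p" using cop_p coprime_absorb_left by blast
  thus False using p_gt2 by simp
qed

lemma mem_shift: assumes j: "j < p - 1"
  shows "a ^ j mod (p * q) \<in> shift1 (p * q) (S_set (p * q) p a) \<longleftrightarrow> a ^ j mod p \<in> T"
proof -
  define x where "x = a ^ j mod p"
  have x1: "x \<in> {1..<p}" unfolding x_def by (rule e_range[OF j])
  have Lx: "L x = j" unfolding x_def using L_pow j by simp
  have xc: "[a ^ j = x] (mod p)" unfolding x_def by (simp add: cong_def)
  have "a ^ j mod (p * q) \<in> shift1 (p * q) (S_set (p * q) p a) \<longleftrightarrow>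
        (\<exists>k<p - 1. [a ^ j = a ^ k + 1] (mod p) \<and> [a ^ j = a ^ k + 1] (mod q))"
    unfolding sh_iff crt[symmetric] by (simp add: cong_def)
  also have "\<dots> \<longleftrightarrow> x \<in> T"
  proof
    assume "\<exists>k<p - 1. [a ^ j = a ^ k + 1] (mod p) \<and> [a ^ j = a ^ k + 1] (mod q)"
    then obtain k where k: "k < p - 1" "[a ^ j = a ^ k + 1] (mod p)" "[a ^ j = a ^ k + 1] (mod q)" by blast
    have xk: "[x = a ^ k + 1] (mod p)" using xc k(2) cong_sym cong_trans by blast
    have "x \<noteq> 1"
    proof
      assume "x = 1"
      hence "[a ^ k + 1 = 0 + 1] (mod p)" using xk cong_sym by simp
      hence "[a ^ k = 0] (mod p)" using cong_add_rcancel_nat by blast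
      thus False using not_p_dvd by blast
    qed
    hence x2: "x \<in> {2..<p}" using x1 by auto
    let ?y = "p + 1 - x"
    have "[a ^ k + 1 = a ^ (h + L ?y) + 1] (mod p)" using xk key_p[OF x2] cong_sym cong_trans by blast
    hence "[a ^ k = a ^ (h + L ?y)] (mod p)" using cong_add_rcancel_nat by blast
    hence "[k = h + L ?y] (mod (p - 1))" using pow_p_iff by blast
    hence "[k = h + L ?y] (mod n)" using n_dvd cong_dvd_modulus_nat by blast
    hence kq: "[a ^ k = a ^ (h + L ?y)] (mod q)" using pow_q_iff by blast
    have "[a ^ j + a ^ L ?y = (a ^ k + 1) + a ^ L ?y] (mod q)" using k(3) by (rule cong_add) simp
    also have "[(a ^ k + 1) + a ^ L ?y = (a ^ (h + L ?y) + a ^ L ?y) + 1] (mod q)"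
      proof -
      have "[(a ^ k + 1) + a ^ L ?y = (a ^ (h + L ?y) + 1) + a ^ L ?y] (mod q)" by (intro cong_add cong_refl kq)
      moreover have "(a ^ (h + L ?y) + 1) + a ^ L ?y = (a ^ (h + L ?y) + a ^ L ?y) + 1" by simp
      ultimately show ?thesis by simp
    qed
    also have "[(a ^ (h + L ?y) + a ^ L ?y) + 1 = 0 + 1] (mod q)" using negpow by (rule cong_add) simp
    finally have "[a ^ L x + a ^ L ?y = 1] (mod q)" using Lx by simp
    thus "x \<in> T" unfolding T_def using x2 by simp
  next
    assume "x \<in> T"
    hence x2: "x \<in> {2..<p}" and c: "[a ^ L x + a ^ L (p + 1 - x) = 1] (mod q)" unfolding T_def by auto
    let ?y = "p + 1 - x"
    define k where "k = (h + L ?y) mod (p - 1)"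
    have k: "k < p - 1" unfolding k_def using p_gt2 by simp
    have "[k = h + L ?y] (mod (p - 1))" unfolding k_def by (simp add: cong_def)
    hence kp: "[a ^ k = a ^ (h + L ?y)] (mod p)" and "[k = h + L ?y] (mod n)"
      using pow_p_iff n_dvd cong_dvd_modulus_nat by blast+
    hence kq: "[a ^ k = a ^ (h + L ?y)] (mod q)" using pow_q_iff by blast
    have "[a ^ k + 1 = a ^ (h + L ?y) + 1] (mod p)" using kp by (rule cong_add) simp
    also have "[a ^ (h + L ?y) + 1 = x] (mod p)" by (rule key_p[OF x2])
    finally have p1: "[a ^ j = a ^ k + 1] (mod p)" using xc cong_sym cong_trans by blast
    have "[(a ^ k + 1) + a ^ L ?y = (a ^ (h + L ?y) + a ^ L ?y) + 1] (mod q)"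
      proof -
      have "[(a ^ k + 1) + a ^ L ?y = (a ^ (h + L ?y) + 1) + a ^ L ?y] (mod q)" by (intro cong_add cong_refl kq)
      moreover have "(a ^ (h + L ?y) + 1) + a ^ L ?y = (a ^ (h + L ?y) + a ^ L ?y) + 1" by simp
      ultimately show ?thesis by simp
    qed
    also have "[(a ^ (h + L ?y) + a ^ L ?y) + 1 = 0 + 1] (mod q)" using negpow by (rule cong_add) simp
    also have "[0 + 1 = a ^ j + a ^ L ?y] (mod q)" using c Lx cong_sym by simp
    finally have "[a ^ k + 1 = a ^ j] (mod q)" using cong_add_rcancel_nat by blast
    hence "[a ^ j = a ^ k + 1] (mod q)" by (rule cong_sym)
    thus "\<exists>k<p - 1. [a ^ j = a ^ k + 1] (mod p) \<and> [a ^ j = a ^ k + 1] (mod q)" using k p1 by blast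
  qed
  finally show ?thesis unfolding x_def .
qed


end

context ctx begin

lemma stepA: "card (S_set (p * q) p a \<inter> shift1 (p * q) (S_set (p * q) p a)) = card T"
proof -
  let ?N = "p * q"
  let ?f = "\<lambda>j. a ^ j mod ?N" and ?e = "\<lambda>j. a ^ j mod p"
  let ?Sh = "shift1 ?N (S_set ?N p a)"
  define J where "J = {j \<in> {..<p - 1}. ?f j \<in> ?Sh}"
  have Simg: "S_set ?N p a = ?f ` {..<p - 1}" unfolding S_set_def by auto
  have modp: "?f j mod p = ?e j" for j by (simp add: mod_mod_cancel)
  have finj: "inj_on ?f {..<p - 1}"
  proof (rule inj_onI)
    fix j k assume jk: "j \<in> {..<p - 1}" "k \<in> {..<p - 1}" "?f j = ?f k"
    hence "?e j = ?e k" using modp by metis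
    thus "j = k" using e_inj jk by (simp add: inj_on_def)
  qed
  have "S_set ?N p a \<inter> ?Sh = ?f ` J" unfolding Simg J_def by auto
  moreover have Jsub: "J \<subseteq> {..<p - 1}" unfolding J_def by auto
  ultimately have c1: "card (S_set ?N p a \<inter> ?Sh) = card J"
    using card_image[OF inj_on_subset[OF finj Jsub]] by simp
  have "T = ?e ` J"
  proof (rule equalityI; rule subsetI)
    fix x assume x: "x \<in> T"
    hence x1: "x \<in> {1..<p}" unfolding T_def by auto
    have lx: "L x < p - 1" using L_prop(2)[OF x1] .
    have ex: "?e (L x) = x" using L_prop(1)[OF x1] x1 by (simp add: cong_def)
    hence "?f (L x) \<in> ?Sh" using mem_shift[OF lx] x by simp
    hence "L x \<in> J" unfolding J_def using lx by simp
    thus "x \<in> ?e ` J" using ex by (metis image_eqI)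
  next
    fix x assume "x \<in> ?e ` J"
    then obtain j where j: "j \<in> J" "x = ?e j" by blast
    thus "x \<in> T" using mem_shift[of j] unfolding J_def by auto
  qed
  hence "card T = card J"
    using card_image[OF inj_on_subset[OF e_inj Jsub]] by simp
  thus ?thesis using c1 by simp
qed

lemma aux_div: fixes c X N :: real shows "N * c = X \<Longrightarrow> N \<noteq> 0 \<Longrightarrow> c = (1 / N) * X"
  by (simp add: field_simps)

theorem final:
  "real (card (S_set (p * q) p a \<inter> shift1 (p * q) (S_set (p * q) p a))) =
    (1 / real n ^ 2) *
      (real (p + 1) * real (card (Bset q a)) +
       (\<Sum>i\<in>{1..<n}. \<Sum>j\<in>{i..<n - i}.
          2 * (2 - (if i = j then 1 else 0)) *
          Re (c_coef q a n i j * jacobi p (chi_pow p a n i) (chi_pow p a n j))))"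
proof -
  let ?X = "real (p + 1) * real (card (Bset q a)) +
       (\<Sum>i\<in>{1..<n}. \<Sum>j\<in>{i..<n - i}.
          2 * (2 - (if i = j then 1 else 0)) *
          Re (c_coef q a n i j * jacobi p (chi_pow p a n i) (chi_pow p a n j)))"
  have sc: "(\<Sum>i\<in>{1..<n}. \<Sum>j\<in>{i..<n - i}. 2 * (2 - (if i = j then 1 else 0)) * Re (F i j)) =
    (\<Sum>i\<in>{1..<n}. \<Sum>j\<in>{i..<n - i}.
          2 * (2 - (if i = j then 1 else 0)) *
          Re (c_coef q a n i j * jacobi p (chi_pow p a n i) (chi_pow p a n j)))"
  proof (intro sum.cong refl)
    fix i j assume i: "i \<in> {1..<n}" and j: "j \<in> {i..<n - i}"
    have "K i j = jacobi p (chi_pow p a n i) (chi_pow p a n j)" using i j by (intro step_C[symmetric]) auto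
    thus "2 * (2 - (if i = j then 1 else 0)) * Re (F i j) =
      2 * (2 - (if i = j then 1 else 0)) * Re (c_coef q a n i j * jacobi p (chi_pow p a n i) (chi_pow p a n j))"
      by simp
  qed
  have "(of_nat (n ^ 2 * card T) :: complex) = of_real ?X"
    unfolding step_B main_sum sc ..
  hence "complex_of_real (real (n ^ 2 * card T)) = complex_of_real ?X" by (simp only: of_real_of_nat_eq)
  hence "real (n ^ 2 * card T) = ?X" by (simp only: of_real_eq_iff)
  hence "real n ^ 2 * real (card T) = ?X" by (simp only: of_nat_mult of_nat_power)
  moreover have "real n ^ 2 \<noteq> 0" using n_pos by simp
  ultimately have "real (card T) = (1 / real n ^ 2) * ?X" by (rule aux_div)
  thus ?thesis unfolding stepA .
qed

end

theorem mainTheorem9: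
  fixes p q a n :: nat
  assumes "odd q" and "q > 1"
    and "prime p" and "p > q"
    and "coprime a (p * q)"
    and "[a ^ ((p - 1) div 2) = p * q - 1] (mod (p * q))"
    and "residue_primroot p a"
    and "n = ord q a"
  shows "real (card (S_set (p * q) p a \<inter> shift1 (p * q) (S_set (p * q) p a))) =
    (1 / real n ^ 2) *
      (real (p + 1) * real (card (Bset q a)) +
       (\<Sum>i\<in>{1..<n}. \<Sum>j\<in>{i..<n - i}.
          2 * (2 - (if i = j then 1 else 0)) *
          Re (c_coef q a n i j * jacobi p (chi_pow p a n i) (chi_pow p a n j))))"
proof -
  interpret ctx p q a n using assms by unfold_locales
  show ?thesis by (rule final)
qed


end
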